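(* Let $B$ be a noetherian connected graded algebra over $\Bbbk$ that satisfies a polynomial identity and is generated in degree $1$. If every finite linear combination of homogeneous elements of odd degree is nilpotent, then $B$ is finite-dimensional over $\Bbbk$.
   Context: $\Bbbk$ is an algebraically closed field of characteristic zero. A connected graded algebra is $B=\bigoplus_{i\ge0}B_i$ with $B_0=\Bbbk$ and each $B_i$ finite-dimensional. *)

theory Defs
  imports Main "HOL-Computational_Algebra.Polynomial"
begin

definition alg_closed :: "'k::field itself \<Rightarrow> bool" where
  "alg_closed _ \<longleftrightarrow> (\<forall>p::'k poly. 0 < degree p \<longrightarrow> (\<exists>x. poly p x = 0))"

text \<open>The algebra B is the whole type 'b (a unital ring), made a k-algebra by smul.\<close>
definition k_algebra :: "('k::field \<Rightarrow> 'b::ring_1 \<Rightarrow> 'b) \<Rightarrow> bool" where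
  "k_algebra smul \<longleftrightarrow> vector_space smul \<and>
     (\<forall>c x y. smul c (x * y) = smul c x * y \<and> smul c (x * y) = x * smul c y)"

definition connected_graded :: "('k::field \<Rightarrow> 'b::ring_1 \<Rightarrow> 'b) \<Rightarrow> (nat \<Rightarrow> 'b set) \<Rightarrow> bool" where
  "connected_graded smul Bg \<longleftrightarrow>
     (\<forall>i. module.subspace smul (Bg i)) \<and>
     (1::'b) \<noteq> 0 \<and> Bg 0 = range (\<lambda>c. smul c 1) \<and>
     (\<forall>i. \<exists>S. finite S \<and> module.span smul S = Bg i) \<and>
     (\<forall>i j x y. x \<in> Bg i \<longrightarrow> y \<in> Bg j \<longrightarrow> x * y \<in> Bg (i + j)) \<and>
     (\<forall>x. \<exists>N b. (\<forall>i<N. b i \<in> Bg i) \<and> x = (\<Sum>i<N. b i)) \<and>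
     (\<forall>N b. (\<forall>i<N. b i \<in> Bg i) \<longrightarrow> (\<Sum>i<N. b i) = 0 \<longrightarrow> (\<forall>i<N. b i = 0))"

definition generated_in_degree_1 :: "('k::field \<Rightarrow> 'b::ring_1 \<Rightarrow> 'b) \<Rightarrow> (nat \<Rightarrow> 'b set) \<Rightarrow> bool" where
  "generated_in_degree_1 smul Bg \<longleftrightarrow>
     module.span smul {prod_list xs | xs. set xs \<subseteq> Bg 1} = UNIV"

definition left_ideal :: "('k::field \<Rightarrow> 'b::ring_1 \<Rightarrow> 'b) \<Rightarrow> 'b set \<Rightarrow> bool" where
  "left_ideal smul I \<longleftrightarrow> module.subspace smul I \<and> (\<forall>a x. x \<in> I \<longrightarrow> a * x \<in> I)"

definition right_ideal :: "('k::field \<Rightarrow> 'b::ring_1 \<Rightarrow> 'b) \<Rightarrow> 'b set \<Rightarrow> bool" where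
  "right_ideal smul I \<longleftrightarrow> module.subspace smul I \<and> (\<forall>a x. x \<in> I \<longrightarrow> x * a \<in> I)"

definition noetherian_alg :: "('k::field \<Rightarrow> 'b::ring_1 \<Rightarrow> 'b) \<Rightarrow> bool" where
  "noetherian_alg smul \<longleftrightarrow>
     (\<forall>I :: nat \<Rightarrow> 'b set. (\<forall>n. left_ideal smul (I n)) \<and> incseq I \<longrightarrow> (\<exists>m. \<forall>n\<ge>m. I n = I m)) \<and>
     (\<forall>I :: nat \<Rightarrow> 'b set. (\<forall>n. right_ideal smul (I n)) \<and> incseq I \<longrightarrow> (\<exists>m. \<forall>n\<ge>m. I n = I m))"

text \<open>Polynomial identity: a nonzero element f of the free algebra k<x_0, x_1, ...>,
  given by its finitely supported coefficient function on words (lists of variable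
  indices), vanishing under every substitution of the variables by elements of B.\<close>
definition satisfies_PI :: "('k::field \<Rightarrow> 'b::ring_1 \<Rightarrow> 'b) \<Rightarrow> bool" where
  "satisfies_PI smul \<longleftrightarrow>
     (\<exists>f :: nat list \<Rightarrow> 'k. finite {w. f w \<noteq> 0} \<and> (\<exists>w. f w \<noteq> 0) \<and>
        (\<forall>a :: nat \<Rightarrow> 'b. (\<Sum>w\<in>{w. f w \<noteq> 0}. smul (f w) (prod_list (map a w))) = 0))"

definition finite_dim_alg :: "('k::field \<Rightarrow> 'b::ring_1 \<Rightarrow> 'b) \<Rightarrow> bool" where
  "finite_dim_alg smul \<longleftrightarrow> (\<exists>S. finite S \<and> module.span smul S = UNIV)"

end

theory Submission
  imports Defs
begin

definition ideal2 :: "('k::field \<Rightarrow> 'b::ring_1 \<Rightarrow> 'b) \<Rightarrow> 'b set \<Rightarrow> bool" where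
  "ideal2 smul I \<longleftrightarrow> left_ideal smul I \<and> right_ideal smul I"

definition nilp :: "'b::ring_1 set \<Rightarrow> bool" where
  "nilp I \<longleftrightarrow> (\<exists>m. \<forall>xs. length xs = m \<longrightarrow> set xs \<subseteq> I \<longrightarrow> prod_list xs = 0)"

locale galg = vector_space smul
  for smul :: "'k::field \<Rightarrow> 'b::ring_1 \<Rightarrow> 'b" +
  fixes Bg :: "nat \<Rightarrow> 'b set"
  assumes ml: "\<And>c x y. smul c (x*y) = smul c x * y"
  and mr: "\<And>c x y. smul c (x*y) = x * smul c y"
  and gm: "\<And>i j x y. x \<in> Bg i \<Longrightarrow> y \<in> Bg j \<Longrightarrow> x*y \<in> Bg (i+j)"
  and one0: "1 \<in> Bg 0"
  and dec: "\<And>x. \<exists>N b. (\<forall>i<N. b i \<in> Bg i) \<and> x = (\<Sum>i<N. b i)"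
  and acc: "\<And>I. (\<forall>n. left_ideal smul (I n)) \<Longrightarrow> incseq I \<Longrightarrow> \<exists>m. \<forall>n\<ge>m. I n = I m"
  and nilodd: "\<And>x. x \<in> span (\<Union>i\<in>{i. odd i}. Bg i) \<Longrightarrow> \<exists>n. x^n = 0"
begin

definition R :: "bool \<Rightarrow> 'b set" where
  "R p = span (\<Union>i\<in>{i. odd i = p}. Bg i)"

lemma span_mult:
  assumes x: "x \<in> span A" and y: "y \<in> span C"
    and h: "\<And>a c. a \<in> A \<Longrightarrow> c \<in> C \<Longrightarrow> a * c \<in> span D"
  shows "x * y \<in> span D"
proof -
  have inner: "a * y \<in> span D" if a: "a \<in> A" for a
    using y
  proof (induct rule: span_induct)
    case base
    show ?case unfolding subspace_def
      by (auto simp: span_zero span_add distrib_left span_scale mr[symmetric])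
  next
    case (step c) then show ?case using h a by blast
  qed
  show ?thesis using x
  proof (induct rule: span_induct)
    case base
    show ?case unfolding subspace_def
      by (auto simp: span_zero span_add distrib_right span_scale ml[symmetric])
  next
    case (step a) then show ?case using inner by blast
  qed
qed

lemma R_mult: "x \<in> R p \<Longrightarrow> y \<in> R q \<Longrightarrow> x * y \<in> R (p \<noteq> q)"
  unfolding R_def
proof (erule span_mult, assumption)
  fix a c assume a: "a \<in> (\<Union>i\<in>{i. odd i = p}. Bg i)" and c: "c \<in> (\<Union>i\<in>{i. odd i = q}. Bg i)"
  then obtain i j where "a \<in> Bg i" "odd i = p" "c \<in> Bg j" "odd j = q" by blast
  then have "a * c \<in> Bg (i + j)" "odd (i + j) = (p \<noteq> q)" using gm by auto
  then show "a * c \<in> span (\<Union>i\<in>{i. odd i = (p \<noteq> q)}. Bg i)"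
    by (intro span_base) blast
qed

lemma one_R: "1 \<in> R False"
  unfolding R_def using one0 by (auto intro!: span_base)

lemma R_sub: "subspace (R p)" unfolding R_def by simp

lemma R_dec: "\<exists>e o'. e \<in> R False \<and> o' \<in> R True \<and> x = e + o'"
proof -
  obtain N b where b: "\<forall>i<N. b i \<in> Bg i" and x: "x = (\<Sum>i<N. b i)" using dec by blast
  let ?e = "\<Sum>i<N. if odd i then 0 else b i"
  let ?o = "\<Sum>i<N. if odd i then b i else 0"
  have "?e \<in> R False" unfolding R_def using b
    by (intro span_sum) (auto intro!: span_base simp: span_zero)
  moreover have "?o \<in> R True" unfolding R_def using b
    by (intro span_sum) (auto intro!: span_base simp: span_zero)
  moreover have "x = ?e + ?o" unfolding x sum.distrib[symmetric]
    by (rule sum.cong) auto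
  ultimately show ?thesis by blast
qed

lemma R_pow: "x \<in> R True \<Longrightarrow> x ^ j \<in> R (odd j)"
proof (induct j)
  case 0 then show ?case using one_R by simp
next
  case (Suc j) then show ?case using R_mult[of x True "x^j" "odd j"] by simp
qed

lemma nil_R: "x \<in> R True \<Longrightarrow> \<exists>n. x^n = 0"
  using nilodd unfolding R_def by simp


lemma acc_max:
  assumes F: "\<And>I. I \<in> F \<Longrightarrow> left_ideal smul I" and ne: "M0 \<in> F"
  shows "\<exists>M\<in>F. \<forall>I\<in>F. M \<subseteq> I \<longrightarrow> I = M"
proof (rule ccontr)
  assume "\<not> ?thesis"
  then have st: "\<And>M. M \<in> F \<Longrightarrow> \<exists>I. I \<in> F \<and> M \<subset> I" by blast
  define g where "g M = (SOME I. I \<in> F \<and> M \<subset> I)" for M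
  have step: "g M \<in> F \<and> M \<subset> g M" if "M \<in> F" for M
    unfolding g_def by (rule someI_ex[OF st[OF that]])
  define f where "f n = (g ^^ n) M0" for n
  have fin: "f n \<in> F" for n
  proof (induct n)
    case 0 show ?case unfolding f_def using ne by simp
  next
    case (Suc n) then show ?case unfolding f_def using step by simp
  qed
  have lt: "f n \<subset> f (Suc n)" for n
    using step[OF fin[of n]] unfolding f_def by simp
  have inc: "incseq f" by (rule incseq_SucI) (use lt in blast)
  have lid: "\<forall>n. left_ideal smul (f n)" using F fin by blast
  obtain m where m: "\<forall>n\<ge>m. f n = f m" using acc[OF lid inc] by blast
  have "f (Suc m) = f m" using m[rule_format, of "Suc m"] by linarith
  with lt[of m] show False by simp
qed
end

locale galgN = galg +
  fixes N :: "'b set"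
  assumes NI: "ideal2 smul N" and Nn: "nilp N"
  and Nmax: "\<And>I. ideal2 smul I \<Longrightarrow> nilp I \<Longrightarrow> N \<subseteq> I \<Longrightarrow> I = N"
begin

lemma Nsub: "subspace N" using NI unfolding ideal2_def left_ideal_def by blast
lemma N0: "0 \<in> N" using Nsub subspace_0 by blast
lemma Nadd: "x \<in> N \<Longrightarrow> y \<in> N \<Longrightarrow> x + y \<in> N" using Nsub subspace_add by blast
lemma Nneg: "x \<in> N \<Longrightarrow> - x \<in> N" using Nsub subspace_neg by blast
lemma Ndiff: "x \<in> N \<Longrightarrow> y \<in> N \<Longrightarrow> x - y \<in> N" using Nsub subspace_diff by blast
lemma Nlm: "x \<in> N \<Longrightarrow> a * x \<in> N" using NI unfolding ideal2_def left_ideal_def by blast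
lemma Nrm: "x \<in> N \<Longrightarrow> x * a \<in> N" using NI unfolding ideal2_def right_ideal_def by blast

lemma ideal2I:
  assumes "subspace K" "\<And>a x. x \<in> K \<Longrightarrow> a * x \<in> K" "\<And>a x. x \<in> K \<Longrightarrow> x * a \<in> K"
  shows "ideal2 smul K"
  using assms unfolding ideal2_def left_ideal_def right_ideal_def by blast

lemma pair_prod:
  assumes K: "\<forall>x\<in>K. \<forall>y\<in>K. x*y \<in> N"
  shows "length xs = 2*k \<Longrightarrow> set xs \<subseteq> K \<Longrightarrow> \<exists>ys. length ys = k \<and> set ys \<subseteq> N \<and> prod_list xs = prod_list ys"
proof (induct k arbitrary: xs)
  case 0 then show ?case by auto
next
  case (Suc k)
  then obtain a b rest where xs: "xs = a # b # rest"
    by (cases xs; cases "tl xs") auto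
  with Suc.prems have "length rest = 2*k" "set rest \<subseteq> K" "a \<in> K" "b \<in> K" by auto
  with Suc.hyps obtain ys where ys: "length ys = k" "set ys \<subseteq> N" "prod_list rest = prod_list ys" by blast
  have "a * b \<in> N" using K \<open>a \<in> K\<close> \<open>b \<in> K\<close> by blast
  then show ?case using ys xs
    by (intro exI[of _ "(a*b) # ys"]) (auto simp: mult.assoc)
qed

lemma N_absorb:
  assumes J: "ideal2 smul J" and JJ: "\<forall>x\<in>J. \<forall>y\<in>J. x*y \<in> N"
  shows "J \<subseteq> N"
proof -
  define K where "K = {n + j | n j. n \<in> N \<and> j \<in> J}"
  have Jsub: "subspace J" using J unfolding ideal2_def left_ideal_def by blast
  have Jl: "\<And>a x. x \<in> J \<Longrightarrow> a * x \<in> J" using J unfolding ideal2_def left_ideal_def by blast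
  have Jr: "\<And>a x. x \<in> J \<Longrightarrow> x * a \<in> J" using J unfolding ideal2_def right_ideal_def by blast
  have KI: "ideal2 smul K"
    unfolding K_def
  proof (intro ideal2I, unfold subspace_def, intro conjI allI impI ballI)
    show "0 \<in> {n + j |n j. n \<in> N \<and> j \<in> J}"
      using N0 subspace_0[OF Jsub] by force
  next
    fix x y assume "x \<in> {n + j |n j. n \<in> N \<and> j \<in> J}" "y \<in> {n + j |n j. n \<in> N \<and> j \<in> J}"
    then obtain n j n' j' where "x = n + j" "y = n' + j'" "n \<in> N" "j \<in> J" "n' \<in> N" "j' \<in> J" by blast
    then show "x + y \<in> {n + j |n j. n \<in> N \<and> j \<in> J}"
      by (intro CollectI exI[of _ "n+n'"] exI[of _ "j+j'"])
         (auto simp: Nadd subspace_add[OF Jsub] algebra_simps)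
  next
    fix c x assume "x \<in> {n + j |n j. n \<in> N \<and> j \<in> J}"
    then obtain n j where "x = n + j" "n \<in> N" "j \<in> J" by blast
    then show "smul c x \<in> {n + j |n j. n \<in> N \<and> j \<in> J}"
      using subspace_scale[OF Nsub] subspace_scale[OF Jsub]
      by (intro CollectI exI[of _ "smul c n"] exI[of _ "smul c j"]) (auto simp: scale_right_distrib)
  next
    fix a x assume "x \<in> {n + j |n j. n \<in> N \<and> j \<in> J}"
    then obtain n j where "x = n + j" "n \<in> N" "j \<in> J" by blast
    then show "a * x \<in> {n + j |n j. n \<in> N \<and> j \<in> J}"
      by (intro CollectI exI[of _ "a * n"] exI[of _ "a * j"]) (auto simp: Nlm Jl distrib_left)
  next
    fix a x assume "x \<in> {n + j |n j. n \<in> N \<and> j \<in> J}"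
    then obtain n j where "x = n + j" "n \<in> N" "j \<in> J" by blast
    then show "x * a \<in> {n + j |n j. n \<in> N \<and> j \<in> J}"
      by (intro CollectI exI[of _ "n * a"] exI[of _ "j * a"]) (auto simp: Nrm Jr distrib_right)
  qed
  have KK: "\<forall>x\<in>K. \<forall>y\<in>K. x*y \<in> N"
  proof (intro ballI)
    fix x y assume "x \<in> K" "y \<in> K"
    then obtain n j n' j' where "x = n + j" "y = n' + j'" "n \<in> N" "j \<in> J" "n' \<in> N" "j' \<in> J"
      unfolding K_def by blast
    moreover have "j * j' \<in> N" using JJ \<open>j \<in> J\<close> \<open>j' \<in> J\<close> by blast
    moreover have "n * n' \<in> N" "n * j' \<in> N" "j * n' \<in> N"
      using \<open>n \<in> N\<close> \<open>n' \<in> N\<close> by (auto intro: Nrm Nlm)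
    ultimately have "n * n' + n * j' + j * n' + j * j' \<in> N"
      by (intro Nadd) auto
    then show "x * y \<in> N" using \<open>x = n + j\<close> \<open>y = n' + j'\<close>
      by (simp add: distrib_left distrib_right add_ac)
  qed
  obtain m where m: "\<forall>xs. length xs = m \<longrightarrow> set xs \<subseteq> N \<longrightarrow> prod_list xs = 0"
    using Nn unfolding nilp_def by blast
  have "nilp K" unfolding nilp_def
  proof (intro exI[of _ "2*m"] allI impI)
    fix xs :: "'b list" assume "length xs = 2*m" "set xs \<subseteq> K"
    then obtain ys where "length ys = m" "set ys \<subseteq> N" "prod_list xs = prod_list ys"
      using pair_prod[OF KK] by blast
    then show "prod_list xs = 0" using m by simp
  qed
  moreover have "N \<subseteq> K"
  proof
    fix x assume "x \<in> N" then show "x \<in> K" unfolding K_def using subspace_0[OF Jsub]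
      by (intro CollectI exI[of _ x] exI[of _ 0]) simp
  qed
  ultimately have "K = N" using Nmax KI by blast
  moreover have "J \<subseteq> K" unfolding K_def using N0 by force
  ultimately show ?thesis by blast
qed

lemma semiprime:
  assumes b: "\<And>r. b * r * b \<in> N"
  shows "b \<in> N"
proof -
  define M where "M = {x. \<forall>s. b * s * x \<in> N}"
  define J where "J = {x. x \<in> M \<and> (\<forall>y\<in>M. x * y \<in> N)}"
  have bM: "b \<in> M" unfolding M_def using b by blast
  have Mm: "x * a \<in> M" if "x \<in> M" for x a
  proof -
    have "b * s * (x * a) \<in> N" for s
      using Nrm[of "b * s * x" a] that unfolding M_def by (simp add: mult.assoc)
    then show ?thesis unfolding M_def by blast
  qed
  have Ml: "a * x \<in> M" if "x \<in> M" for x a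
  proof -
    have "b * (s * a) * x \<in> N" for s using that unfolding M_def by blast
    then have "b * s * (a * x) \<in> N" for s by (simp add: mult.assoc)
    then show ?thesis unfolding M_def by blast
  qed
  have M0: "0 \<in> M" unfolding M_def using N0 by simp
  have Madd: "x + y \<in> M" if "x \<in> M" "y \<in> M" for x y
    using that unfolding M_def by (auto simp: distrib_left Nadd)
  have Msc: "smul c x \<in> M" if "x \<in> M" for x c
    using that subspace_scale[OF Nsub] unfolding M_def by (auto simp: mr[symmetric])
  have JI: "ideal2 smul J"
  proof (intro ideal2I, unfold subspace_def, intro conjI allI impI ballI)
    show "0 \<in> J" unfolding J_def using M0 N0 by simp
  next
    fix x y assume "x \<in> J" "y \<in> J" then show "x + y \<in> J"
      unfolding J_def using Madd by (auto simp: distrib_right Nadd)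
  next
    fix c x assume "x \<in> J" then show "smul c x \<in> J"
      unfolding J_def using Msc subspace_scale[OF Nsub] by (auto simp: ml[symmetric])
  next
    fix a x assume "x \<in> J" then show "a * x \<in> J"
      unfolding J_def using Ml by (auto simp: mult.assoc Nlm)
  next
    fix a x assume x: "x \<in> J" show "x * a \<in> J"
      unfolding J_def
    proof (intro CollectI conjI ballI)
      show "x * a \<in> M" using x Mm unfolding J_def by blast
      fix y assume "y \<in> M" then have "a * y \<in> M" using Ml by blast
      then have "x * (a * y) \<in> N" using x unfolding J_def by blast
      then show "x * a * y \<in> N" by (simp add: mult.assoc)
    qed
  qed
  have "\<forall>x\<in>J. \<forall>y\<in>J. x*y \<in> N" unfolding J_def by blast
  then have "J \<subseteq> N" using N_absorb JI by blast
  moreover have "b \<in> J" unfolding J_def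
  proof (intro CollectI conjI ballI bM)
    fix y assume "y \<in> M" then have "b * 1 * y \<in> N" unfolding M_def by blast
    then show "b * y \<in> N" by simp
  qed
  ultimately show ?thesis by blast
qed


definition lann :: "'b \<Rightarrow> 'b set" where "lann b = {t. t * b \<in> N}"

lemma lann_lid: "left_ideal smul (lann b)"
  unfolding left_ideal_def subspace_def lann_def
  by (auto simp: N0 distrib_right Nadd ml[symmetric] subspace_scale[OF Nsub] mult.assoc Nlm)

lemma max_lann:
  assumes "a0 \<notin> N" "Q a0"
  shows "\<exists>a. a \<notin> N \<and> Q a \<and> (\<forall>b. b \<notin> N \<and> Q b \<and> lann a \<subseteq> lann b \<longrightarrow> lann b = lann a)"
proof -
  have "\<exists>M\<in>lann ` {b. b \<notin> N \<and> Q b}. \<forall>I\<in>lann ` {b. b \<notin> N \<and> Q b}. M \<subseteq> I \<longrightarrow> I = M"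
    by (rule acc_max[of _ "lann a0"]) (use assms lann_lid in auto)
  then show ?thesis by blast
qed

lemma comm_pow: "(a * y) ^ j * a = a * (y * a) ^ j" for a y :: 'b
  by (induct j) (simp_all add: mult.assoc)

lemma chain:
  assumes aN: "a \<notin> N"
    and maxa: "\<forall>b. b \<notin> N \<and> Q b \<and> lann a \<subseteq> lann b \<longrightarrow> lann b = lann a"
    and Qc: "\<And>j. Q (a * (y * a) ^ j)"
    and nil: "(a * y) ^ n \<in> N"
  shows "a * y * a \<in> N"
proof (rule ccontr)
  assume ya: "a * y * a \<notin> N"
  define J where "J = {j. a * (y * a) ^ j \<notin> N}"
  have "1 \<in> J" unfolding J_def using ya by (simp add: mult.assoc)
  have Jb: "J \<subseteq> {..<n}"
  proof
    fix j assume "j \<in> J"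
    show "j \<in> {..<n}"
    proof (rule ccontr)
      assume "j \<notin> {..<n}" then have "j = n + (j - n)" by simp
      then have "a * (y * a) ^ j = (a * y) ^ n * ((a * y) ^ (j - n) * a)"
        by (metis comm_pow mult.assoc power_add)
      then have "a * (y * a) ^ j \<in> N" using Nrm[OF nil] by simp
      with \<open>j \<in> J\<close> show False unfolding J_def by simp
    qed
  qed
  then have fJ: "finite J" by (rule finite_subset) simp
  define j where "j = Max J"
  have jJ: "j \<in> J" unfolding j_def using fJ \<open>1 \<in> J\<close> Max_in by blast
  have "Suc j \<notin> J" using Max_ge[OF fJ, of "Suc j"] unfolding j_def by auto
  define c where "c = a * (y * a) ^ j"
  have cN: "c \<notin> N" using jJ unfolding J_def c_def by simp
  have "lann a \<subseteq> lann c" unfolding lann_def c_def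
    using Nrm by (auto simp: mult.assoc[symmetric])
  then have eq: "lann c = lann a" using maxa cN Qc unfolding c_def by blast
  have "a * y * c = a * (y * a) ^ Suc j" unfolding c_def by (simp add: mult.assoc)
  then have "a * y \<in> lann c" unfolding lann_def using \<open>Suc j \<notin> J\<close> unfolding J_def by simp
  then have "a * y \<in> lann a" using eq by simp
  then show False using ya unfolding lann_def by simp
qed

lemma pow_cong: "a - b \<in> N \<Longrightarrow> a ^ k - b ^ k \<in> N"
proof (induct k)
  case 0 then show ?case using N0 by simp
next
  case (Suc k)
  have "a ^ Suc k - b ^ Suc k = a * (a ^ k - b ^ k) + (a - b) * b ^ k"
    by (simp add: algebra_simps)
  then show ?case using Suc Nlm Nrm Nadd by metis
qed

lemma sum_pow:
  assumes uv: "u * v \<in> N" and vu: "v * u \<in> N"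
  shows "(u + v) ^ Suc k - (u ^ Suc k + v ^ Suc k) \<in> N"
proof (induct k)
  case 0 then show ?case using N0 by simp
next
  case (Suc k)
  have e: "(u + v) ^ Suc (Suc k) - (u ^ Suc (Suc k) + v ^ Suc (Suc k)) =
    (u + v) * ((u + v) ^ Suc k - (u ^ Suc k + v ^ Suc k)) + (u * v) * v ^ k + (v * u) * u ^ k"
    by (simp add: algebra_simps)
  have "(u + v) * ((u + v) ^ Suc k - (u ^ Suc k + v ^ Suc k)) \<in> N" using Suc Nlm by blast
  moreover have "(u * v) * v ^ k \<in> N" using uv Nrm by blast
  moreover have "(v * u) * u ^ k \<in> N" using vu Nrm by blast
  ultimately show ?case unfolding e using Nadd by blast
qed

lemma Rsub: "x \<in> R p \<Longrightarrow> y \<in> R p \<Longrightarrow> x + y \<in> R p"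
  unfolding R_def by (rule span_add)

lemma sq_nil:
  assumes x: "x \<in> R True" and y: "y \<in> R True" and xx: "x * x \<in> N" and yy: "y * y \<in> N"
  shows "\<exists>m. (x * y) ^ m \<in> N"
proof -
  obtain n where n: "(x + y) ^ n = 0" using nil_R[OF Rsub[OF x y]] by blast
  define k where "k = Suc n"
  have "2 * k = n + (2 * k - n)" unfolding k_def by simp
  then have "(x + y) ^ (2 * k) = (x + y) ^ n * (x + y) ^ (2 * k - n)"
    by (metis power_add)
  then have z: "((x + y) ^ 2) ^ k = 0" using n by (simp add: power_mult)
  have "(x + y) ^ 2 - (x * y + y * x) = x * x + y * y"
    by (simp add: algebra_simps power2_eq_square)
  then have "(x + y) ^ 2 - (x * y + y * x) \<in> N" using xx yy Nadd by simp
  then have A: "((x + y) ^ 2) ^ k - (x * y + y * x) ^ k \<in> N" by (rule pow_cong)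
  have uv: "(x * y) * (y * x) \<in> N" using Nlm[OF Nrm[OF yy]] by (simp add: mult.assoc)
  have vu: "(y * x) * (x * y) \<in> N" using Nlm[OF Nrm[OF xx]] by (simp add: mult.assoc)
  have B: "(x * y + y * x) ^ k - ((x * y) ^ k + (y * x) ^ k) \<in> N"
    unfolding k_def by (rule sum_pow[OF uv vu])
  have negC: "- ((x * y) ^ k + (y * x) ^ k) \<in> N" using Nadd[OF A B] z by simp
  have C: "(x * y) ^ k + (y * x) ^ k \<in> N" using Nneg[OF negC] by (metis minus_minus)
  have D: "x * (x * y) ^ k \<in> N" unfolding k_def using Nrm[OF xx]
    by (simp add: mult.assoc)
  have "x * ((x * y) ^ k + (y * x) ^ k) \<in> N" using Nlm[OF C] .
  then have E: "x * (x * y) ^ k + x * (y * x) ^ k \<in> N" by (simp add: distrib_left)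
  have "x * (y * x) ^ k = (x * (x * y) ^ k + x * (y * x) ^ k) - x * (x * y) ^ k" by simp
  then have "x * (y * x) ^ k \<in> N" using Ndiff[OF E D] by metis
  then have "(x * y) ^ k * x * y \<in> N" using Nrm by (simp add: comm_pow)
  then have "(x * y) ^ Suc k \<in> N" by (simp only: power_Suc2 mult.assoc)
  then show ?thesis by blast
qed


lemma key_nil:
  assumes x: "x \<in> R True" and xe: "\<forall>e\<in>R False. x * e * x \<in> N"
  shows "\<exists>m. (x * r) ^ m \<in> N"
proof -
  obtain e o' where e: "e \<in> R False" and o: "o' \<in> R True" and r: "r = e + o'"
    using R_dec by blast
  have ox: "o' * x \<in> R False" using R_mult[OF o x] by simp
  have z: "o' * x * o' \<in> R True" using R_mult[OF ox o] by simp
  have xx: "x * x \<in> N" using xe one_R by fastforce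
  have oo: "o' * o' \<in> R False" using R_mult[OF o o] by simp
  have "o' * (x * (o' * o') * x) * o' \<in> N" using xe oo Nlm Nrm by blast
  then have zz: "(o' * x * o') * (o' * x * o') \<in> N" by (simp add: mult.assoc)
  obtain m where m: "(x * (o' * x * o')) ^ m \<in> N" using sq_nil[OF x z xx zz] by blast
  have "x * (o' * x * o') = (x * o') ^ 2" by (simp add: power2_eq_square mult.assoc)
  then have m2: "(x * o') ^ (2 * m) \<in> N" using m by (simp add: power_mult)
  have ind: "(x * r) ^ Suc k - (x * o') ^ k * (x * r) \<in> N" for k
  proof (induct k)
    case 0 then show ?case using N0 by simp
  next
    case (Suc k)
    have xex: "x * e * x \<in> N" using xe e by blast
    have eq: "(x * r) ^ Suc (Suc k) - (x * o') ^ Suc k * (x * r) =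
      ((x * r) ^ Suc k - (x * o') ^ k * (x * r)) * (x * r) + (x * o') ^ k * (x * e * x) * r"
      unfolding r by (simp add: algebra_simps power_Suc2 del: power_Suc)
    have "((x * r) ^ Suc k - (x * o') ^ k * (x * r)) * (x * r) \<in> N" using Suc Nrm by blast
    moreover have "(x * o') ^ k * (x * e * x) * r \<in> N" using xex Nrm Nlm by blast
    ultimately show ?case unfolding eq using Nadd by blast
  qed
  have "(x * r) ^ Suc (2 * m) \<in> N"
    using Nadd[OF ind[of "2*m"] Nrm[OF m2, of "x * r"]] by simp
  then show ?thesis by blast
qed

lemma odd_in_N: "R True \<subseteq> N"
proof (rule ccontr)
  assume "\<not> R True \<subseteq> N"
  then obtain a0 where a0: "a0 \<in> R True" "a0 \<notin> N" by blast
  define P where "P a \<longleftrightarrow> (\<forall>o'\<in>R True. a * o' \<in> N)" for a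
  define I where "I = {z. \<forall>a. P a \<longrightarrow> a * z \<in> N}"
  have P_mult: "P (a * r)" if "P a" for a r
    unfolding P_def
  proof
    fix o' assume o: "o' \<in> R True"
    obtain e o2 where e: "e \<in> R False" and o2: "o2 \<in> R True" and r: "r = e + o2"
      using R_dec by blast
    have "e * o' \<in> R True" using R_mult[OF e o] by simp
    then have "a * (e * o') \<in> N" using that unfolding P_def by blast
    moreover have "a * o2 * o' \<in> N" using that o2 Nrm unfolding P_def by blast
    ultimately show "a * r * o' \<in> N" unfolding r
      by (simp add: algebra_simps Nadd)
  qed
  have I_R: "z \<in> I" if "z \<in> R True" for z using that unfolding I_def P_def by blast
  have I_r: "z * y \<in> I" if "z \<in> I" for z y
    using that Nrm unfolding I_def by (simp add: mult.assoc[symmetric])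
  have I_l: "r * z \<in> I" if "z \<in> I" for z r
  proof -
    have "a * r * z \<in> N" if "P a" for a using \<open>z \<in> I\<close> P_mult[OF that] unfolding I_def by blast
    then show ?thesis unfolding I_def by (simp add: mult.assoc)
  qed
  define Q where "Q b \<longleftrightarrow> b \<in> I \<and> (b \<in> R True \<or> b \<in> R False)" for b
  obtain a where aN: "a \<notin> N" and Qa: "Q a"
    and maxa: "\<forall>b. b \<notin> N \<and> Q b \<and> lann a \<subseteq> lann b \<longrightarrow> lann b = lann a"
    using max_lann[of a0 Q] a0 I_R unfolding Q_def by blast
  have aya: "a * y * a \<in> N" if ap: "a \<in> R p" and y: "y \<in> R (\<not> p)" for p y
  proof -
    have "a * y \<in> R True" using R_mult[OF ap y] by simp
    then obtain n where "(a * y) ^ n = 0" using nil_R by blast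
    then have nN: "(a * y) ^ n \<in> N" using N0 by simp
    show ?thesis
    proof (rule chain[OF aN maxa _ nN])
      fix j
      have "y * a \<in> R True" using R_mult[OF y ap] by simp
      then have "(y * a) ^ j \<in> R (odd j)" by (rule R_pow)
      then have "a * (y * a) ^ j \<in> R (p \<noteq> odd j)" using R_mult[OF ap] by blast
      moreover have "a * (y * a) ^ j \<in> I" using Qa I_r unfolding Q_def by blast
      ultimately show "Q (a * (y * a) ^ j)" unfolding Q_def by (cases "p \<noteq> odd j") auto
    qed
  qed
  have key: "\<exists>x\<in>R True. x \<notin> N \<and> (\<forall>e\<in>R False. x * e * x \<in> N)"
  proof (cases "a \<in> R True")
    case True
    then show ?thesis using aN aya[of True] by auto
  next
    case False
    then have aF: "a \<in> R False" using Qa unfolding Q_def by blast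
    show ?thesis
    proof (cases "\<exists>o'\<in>R True. a * o' \<notin> N")
      case True
      then obtain o' where o: "o' \<in> R True" and aoN: "a * o' \<notin> N" by blast
      have "a * o' \<in> R True" using R_mult[OF aF o] by simp
      moreover have "a * o' * e * (a * o') \<in> N" if e: "e \<in> R False" for e
      proof -
        have "o' * e \<in> R True" using R_mult[OF o e] by simp
        then have "a * (o' * e) * a \<in> N" using aya[of False] aF by simp
        then have "a * (o' * e) * a * o' \<in> N" by (rule Nrm)
        then show ?thesis by (simp add: mult.assoc)
      qed
      ultimately show ?thesis using aoN by blast
    next
      case False
      then have Pa: "P a" unfolding P_def by blast
      have "a * r * a \<in> N" for r
      proof -
        have "r * a \<in> I" using I_l Qa unfolding Q_def by blast
        then show ?thesis using Pa unfolding I_def by (simp add: mult.assoc)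
      qed
      then have "a \<in> N" by (rule semiprime)
      with aN show ?thesis by blast
    qed
  qed
  then obtain x where x: "x \<in> R True" "x \<notin> N" and xe: "\<forall>e\<in>R False. x * e * x \<in> N" by blast
  define Q' where "Q' b \<longleftrightarrow> (\<exists>s. b = x * s)" for b
  obtain b where bN: "b \<notin> N" and Qb: "Q' b"
    and maxb: "\<forall>c. c \<notin> N \<and> Q' c \<and> lann b \<subseteq> lann c \<longrightarrow> lann c = lann b"
    using max_lann[of x Q'] x unfolding Q'_def by (metis mult_1_right)
  obtain s where bs: "b = x * s" using Qb unfolding Q'_def by blast
  have "b * r * b \<in> N" for r
  proof -
    obtain m where "(x * (s * r)) ^ m \<in> N" using key_nil[OF x(1) xe] by blast
    then have mN: "(b * r) ^ m \<in> N" unfolding bs by (simp add: mult.assoc)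
    show ?thesis
    proof (rule chain[OF bN maxb _ mN])
      fix j show "Q' (b * (r * b) ^ j)" unfolding Q'_def bs
        by (rule exI[of _ "s * (r * (x * s)) ^ j"]) (simp add: mult.assoc)
    qed
  qed
  then have "b \<in> N" by (rule semiprime)
  with bN show False by blast
qed


end

context galg
begin

lemma exN: "\<exists>N. ideal2 smul N \<and> nilp N \<and> (\<forall>I. ideal2 smul I \<longrightarrow> nilp I \<longrightarrow> N \<subseteq> I \<longrightarrow> I = N)"
proof -
  have z: "ideal2 smul {0}" unfolding ideal2_def left_ideal_def right_ideal_def by simp
  have "nilp {0::'b}" unfolding nilp_def
  proof (intro exI[of _ 1] allI impI)
    fix xs :: "'b list" assume "length xs = 1" "set xs \<subseteq> {0}"
    then show "prod_list xs = 0" by (cases xs) auto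
  qed
  then have "\<exists>M\<in>{I. ideal2 smul I \<and> nilp I}. \<forall>I\<in>{I. ideal2 smul I \<and> nilp I}. M \<subseteq> I \<longrightarrow> I = M"
    using z by (intro acc_max[of _ "{0}"]) (auto simp: ideal2_def)
  then show ?thesis by blast
qed

lemma prod_span:
  "set xs \<subseteq> span S \<Longrightarrow> prod_list xs \<in> span {prod_list ys | ys. set ys \<subseteq> S \<and> length ys = length xs}"
proof (induct xs)
  case Nil then show ?case by (auto intro!: span_base)
next
  case (Cons x xs)
  then have x: "x \<in> span S" and ih: "prod_list xs \<in> span {prod_list ys | ys. set ys \<subseteq> S \<and> length ys = length xs}"
    by auto
  have "x * prod_list xs \<in> span {prod_list ys | ys. set ys \<subseteq> S \<and> length ys = length (x # xs)}"
  proof (rule span_mult[OF x ih])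
    fix a c assume "a \<in> S" "c \<in> {prod_list ys | ys. set ys \<subseteq> S \<and> length ys = length xs}"
    then obtain ys where "c = prod_list ys" "set ys \<subseteq> S" "length ys = length xs" by blast
    then show "a * c \<in> span {prod_list ys | ys. set ys \<subseteq> S \<and> length ys = length (x # xs)}"
      using \<open>a \<in> S\<close> by (intro span_base CollectI exI[of _ "a # ys"]) auto
  qed
  then show ?case by simp
qed

lemma findim:
  assumes gen: "span {prod_list xs | xs. set xs \<subseteq> Bg 1} = UNIV"
    and S: "finite S" "span S = Bg 1"
  shows "\<exists>S. finite S \<and> span S = UNIV"
proof -
  obtain N where NI: "ideal2 smul N" and Nn: "nilp N"
    and Nmax: "\<forall>I. ideal2 smul I \<longrightarrow> nilp I \<longrightarrow> N \<subseteq> I \<longrightarrow> I = N"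
    using exN by blast
  interpret galgN smul Bg N using NI Nn Nmax by unfold_locales auto
  have "Bg 1 \<subseteq> (\<Union>i\<in>{i. odd i = True}. Bg i)" by (intro UN_upper) simp
  then have "Bg 1 \<subseteq> R True" unfolding R_def using span_superset by blast
  then have B1: "Bg 1 \<subseteq> N" using odd_in_N by blast
  obtain m where m: "\<forall>xs. length xs = m \<longrightarrow> set xs \<subseteq> N \<longrightarrow> prod_list xs = 0"
    using Nn unfolding nilp_def by blast
  define T where "T = prod_list ` {ys. set ys \<subseteq> S \<and> length ys \<le> m}"
  have fT: "finite T" unfolding T_def by (rule finite_imageI[OF finite_lists_length_le[OF S(1)]])
  have "{prod_list xs | xs. set xs \<subseteq> Bg 1} \<subseteq> span T"
  proof safe
    fix xs assume xs: "set xs \<subseteq> Bg 1"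
    show "prod_list xs \<in> span T"
    proof (cases "m \<le> length xs")
      case True
      have "length (take m xs) = m" using True by simp
      moreover have "set (take m xs) \<subseteq> N" using set_take_subset[of m xs] xs B1 by blast
      ultimately have "prod_list (take m xs) = 0" using m by blast
      then have "prod_list xs = 0"
        by (metis append_take_drop_id mult_zero_left prod_list.append)
      then show ?thesis by (simp add: span_zero)
    next
      case False
      have "prod_list xs \<in> span {prod_list ys | ys. set ys \<subseteq> S \<and> length ys = length xs}"
        using xs S(2) by (intro prod_span) simp
      moreover have "{prod_list ys | ys. set ys \<subseteq> S \<and> length ys = length xs} \<subseteq> T"
      proof (rule subsetI)
        fix z assume "z \<in> {prod_list ys | ys. set ys \<subseteq> S \<and> length ys = length xs}"
        then obtain ys where "z = prod_list ys" "set ys \<subseteq> S" "length ys = length xs" by blast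
        then show "z \<in> T" unfolding T_def using False by (intro image_eqI[of _ _ ys]) auto
      qed
      ultimately show ?thesis using span_mono by blast
    qed
  qed
  then have "span {prod_list xs | xs. set xs \<subseteq> Bg 1} \<subseteq> span T"
    by (rule span_minimal[OF _ subspace_span])
  then show ?thesis using gen fT by blast
qed

end

theorem lemma10p6:
  fixes smul :: "'k::field_char_0 \<Rightarrow> 'b::ring_1 \<Rightarrow> 'b"
    and Bg :: "nat \<Rightarrow> 'b set"
  assumes "alg_closed TYPE('k)"
    and "k_algebra smul"
    and "connected_graded smul Bg"
    and "noetherian_alg smul"
    and "satisfies_PI smul"
    and "generated_in_degree_1 smul Bg"
    and "\<forall>x \<in> module.span smul (\<Union>i\<in>{i. odd i}. Bg i). \<exists>n. x ^ n = 0"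
  shows "finite_dim_alg smul"
proof -
  have vs: "vector_space smul" using assms(2) unfolding k_algebra_def by blast
  have ka1: "\<And>c x y. smul c (x * y) = smul c x * y"
    using assms(2) unfolding k_algebra_def by blast
  have ka2: "\<And>c x y. smul c (x * y) = x * smul c y"
    using assms(2) unfolding k_algebra_def by blast
  interpret vector_space smul by (rule vs)
  have cg: "\<forall>i j x y. x \<in> Bg i \<longrightarrow> y \<in> Bg j \<longrightarrow> x * y \<in> Bg (i + j)"
    "Bg 0 = range (\<lambda>c. smul c 1)" "\<forall>i. \<exists>S. finite S \<and> span S = Bg i"
    "\<forall>x. \<exists>N b. (\<forall>i<N. b i \<in> Bg i) \<and> x = (\<Sum>i<N. b i)"
    using assms(3) unfolding connected_graded_def by auto
  have one: "1 \<in> Bg 0" using cg(2) by (metis rangeI scale_one)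
  have acc: "\<And>I. (\<forall>n. left_ideal smul (I n)) \<Longrightarrow> incseq I \<Longrightarrow> \<exists>m. \<forall>n\<ge>m. I n = I m"
    using assms(4) unfolding noetherian_alg_def by blast
  have nil: "\<And>x. x \<in> span (\<Union>i\<in>{i. odd i}. Bg i) \<Longrightarrow> \<exists>n. x^n = 0"
    using assms(7) by blast
  have gm: "\<And>i j x y. x \<in> Bg i \<Longrightarrow> y \<in> Bg j \<Longrightarrow> x*y \<in> Bg (i+j)" using cg(1) by blast
  have dec: "\<And>x. \<exists>N b. (\<forall>i<N. b i \<in> Bg i) \<and> x = (\<Sum>i<N. b i)" using cg(4) by blast
  interpret galg smul Bg
    by (rule galg.intro[OF vs], rule galg_axioms.intro) (rule ka1 ka2 gm one dec acc nil; assumption)+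
  obtain S where "finite S" "span S = Bg 1" using cg(3) by blast
  then show ?thesis using findim assms(6) unfolding finite_dim_alg_def generated_in_degree_1_def
    by blast
qed

end
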